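(* Let $A$ be a finite-dimensional semisimple Hopf algebra over $k$, $G$ a finite group acting on $A$ by Hopf automorphisms, and $K=A\natural k^G$. For every finite-dimensional $K$-module $M$ and every positive integer $m$, $$\nu^K_m(M)=\sum_{x\in G,\ x^m=1}\nu^A_{m,x^{-1}}(M_x).$$
   Context: $k$ is algebraically closed of characteristic $0$. $k^G$ has basis $\{p_x\}_{x\in G}$ with $p_xp_y=\delta_{x,y}p_x$. The smash coproduct $K=A\natural k^G$ is $A\otimes k^G$ (elements written $a\natural p_x$) with tensor product algebra structure, comultiplication $\Delta(a\natural p_x)=\sum_{y\in G}(a_1\natural p_y)\otimes((y^{-1}\cdot a_2)\natural p_{y^{-1}x})$, counit $\varepsilon(a\natural p_x)=\delta_{1,x}\varepsilon(a)$, antipode $S(a\natural p_x)=(x^{-1}\cdot S(a))\natural p_{x^{-1}}$. Let $\Lambda_A$ be the normalized integral of $A$ ($\varepsilon(\Lambda_A)=1$); then $\Lambda_K=\Lambda_A\natural p_1$ is the normalized integral of $K$. For a $K$-module $M$, $M_x=p_x\cdot M$ (where $p_x$ means $1\natural p_x$), a $K$-submodule, $M=\bigoplus_x M_x$, and each $M_x$ is an $A$-module by restriction. Hopf powers: $h^{[m]}=\sum h_1\cdots h_m$ and, for a Hopf automorphism $\tau$, $h^{[m,\tau]}=\sum h_1(\tau\cdot h_2)\cdots(\tau^{m-1}\cdot h_m)$. Indicators: for a $K$-module $V$ with character $\chi_V$, $\nu^K_m(V)=\chi_V(\Lambda_K^{[m]})$; for an $A$-module $W$ with character $\chi_W$ and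 $x\in G$ whose order divides $m$, $\nu^A_{m,x}(W)=\chi_W(\Lambda_A^{[m,x]})$. *)

theory Defs
  imports "Jordan_Normal_Form.Matrix" "HOL-Algebra.Group" "HOL-Computational_Algebra.Polynomial"
begin

text \<open>A finite-dimensional algebra over the field 'k with basis indexed by the finite
  type 'b; elements are coefficient vectors 'b => 'k.  Tensors of two elements are
  coefficient functions on pairs of basis indices.\<close>

record ('b, 'k) hopf_sc =
  mulc    :: "'b \<Rightarrow> 'b \<Rightarrow> 'b \<Rightarrow> 'k"   (* e_i e_j = sum_l mulc i j l e_l *)
  unitc   :: "'b \<Rightarrow> 'k"                  (* 1 = sum_i unitc i e_i *)
  comulc  :: "'b \<Rightarrow> 'b \<Rightarrow> 'b \<Rightarrow> 'k"   (* Delta e_i = sum comulc i j l e_j (x) e_l *)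
  counitc :: "'b \<Rightarrow> 'k"
  antipc  :: "'b \<Rightarrow> 'b \<Rightarrow> 'k"          (* S e_i = sum_j antipc i j e_j *)

definition bv :: "'b \<Rightarrow> 'b \<Rightarrow> 'k::zero_neq_one" where
  "bv i = (\<lambda>j. if j = i then 1 else 0)"

definition hmul :: "('b::finite, 'k::field) hopf_sc \<Rightarrow> ('b \<Rightarrow> 'k) \<Rightarrow> ('b \<Rightarrow> 'k) \<Rightarrow> ('b \<Rightarrow> 'k)" where
  "hmul H u v = (\<lambda>l. \<Sum>i\<in>UNIV. \<Sum>j\<in>UNIV. u i * v j * mulc H i j l)"

definition hunit :: "('b::finite, 'k::field) hopf_sc \<Rightarrow> ('b \<Rightarrow> 'k)" where
  "hunit H = unitc H"

definition hcomul :: "('b::finite, 'k::field) hopf_sc \<Rightarrow> ('b \<Rightarrow> 'k) \<Rightarrow> ('b \<times> 'b \<Rightarrow> 'k)" where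
  "hcomul H u = (\<lambda>(j, l). \<Sum>i\<in>UNIV. u i * comulc H i j l)"

definition hcounit :: "('b::finite, 'k::field) hopf_sc \<Rightarrow> ('b \<Rightarrow> 'k) \<Rightarrow> 'k" where
  "hcounit H u = (\<Sum>i\<in>UNIV. u i * counitc H i)"

definition hantip :: "('b::finite, 'k::field) hopf_sc \<Rightarrow> ('b \<Rightarrow> 'k) \<Rightarrow> ('b \<Rightarrow> 'k)" where
  "hantip H u = (\<lambda>j. \<Sum>i\<in>UNIV. u i * antipc H i j)"

definition tmul :: "('b::finite, 'k::field) hopf_sc \<Rightarrow> ('b \<times> 'b \<Rightarrow> 'k) \<Rightarrow> ('b \<times> 'b \<Rightarrow> 'k) \<Rightarrow> ('b \<times> 'b \<Rightarrow> 'k)" where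
  "tmul H s t = (\<lambda>(a, b). \<Sum>a1\<in>UNIV. \<Sum>b1\<in>UNIV. \<Sum>a2\<in>UNIV. \<Sum>b2\<in>UNIV.
      s (a1, b1) * t (a2, b2) * mulc H a1 a2 a * mulc H b1 b2 b)"

definition hopf_algebra :: "('b::finite, 'k::field) hopf_sc \<Rightarrow> bool" where
  "hopf_algebra H \<longleftrightarrow>
     (\<forall>u v w. hmul H (hmul H u v) w = hmul H u (hmul H v w)) \<and>
     (\<forall>u. hmul H (hunit H) u = u \<and> hmul H u (hunit H) = u) \<and>
     (\<forall>i a b c. (\<Sum>p\<in>UNIV. comulc H i p c * comulc H p a b) = (\<Sum>p\<in>UNIV. comulc H i a p * comulc H p b c)) \<and>
     (\<forall>i l. (\<Sum>j\<in>UNIV. counitc H j * comulc H i j l) = bv i l) \<and>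
     (\<forall>i j. (\<Sum>l\<in>UNIV. comulc H i j l * counitc H l) = bv i j) \<and>
     (\<forall>u v. hcomul H (hmul H u v) = tmul H (hcomul H u) (hcomul H v)) \<and>
     hcomul H (hunit H) = (\<lambda>(a, b). unitc H a * unitc H b) \<and>
     (\<forall>u v. hcounit H (hmul H u v) = hcounit H u * hcounit H v) \<and>
     hcounit H (hunit H) = 1 \<and>
     (\<forall>u l. (\<Sum>a\<in>UNIV. \<Sum>b\<in>UNIV. hcomul H u (a, b) * hmul H (hantip H (bv a)) (bv b) l) = hcounit H u * hunit H l) \<and>
     (\<forall>u l. (\<Sum>a\<in>UNIV. \<Sum>b\<in>UNIV. hcomul H u (a, b) * hmul H (bv a) (hantip H (bv b)) l) = hcounit H u * hunit H l)"

text \<open>Semisimplicity: the left regular module is semisimple, i.e. every left ideal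
  has a complementary left ideal.\<close>
definition left_ideal :: "('b::finite, 'k::field) hopf_sc \<Rightarrow> ('b \<Rightarrow> 'k) set \<Rightarrow> bool" where
  "left_ideal H I \<longleftrightarrow> (\<lambda>j. 0) \<in> I \<and> (\<forall>u\<in>I. \<forall>v\<in>I. (\<lambda>j. u j + v j) \<in> I) \<and>
     (\<forall>c u. u \<in> I \<longrightarrow> (\<lambda>j. c * u j) \<in> I) \<and> (\<forall>a u. u \<in> I \<longrightarrow> hmul H a u \<in> I)"

definition semisimple :: "('b::finite, 'k::field) hopf_sc \<Rightarrow> bool" where
  "semisimple H \<longleftrightarrow> (\<forall>I. left_ideal H I \<longrightarrow>
     (\<exists>J. left_ideal H J \<and> I \<inter> J = {\<lambda>j. 0} \<and> (\<forall>v. \<exists>a\<in>I. \<exists>b\<in>J. v = (\<lambda>j. a j + b j))))"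

definition norm_integral :: "('b::finite, 'k::field) hopf_sc \<Rightarrow> ('b \<Rightarrow> 'k)" where
  "norm_integral H = (THE L. (\<forall>a. hmul H a L = (\<lambda>j. hcounit H a * L j)) \<and>
                            (\<forall>a. hmul H L a = (\<lambda>j. hcounit H a * L j)) \<and> hcounit H L = 1)"

text \<open>Iterated comultiplication Delta^(m-1) : H -> H^(x)m, tensors indexed by lists of length m;
  convention Delta^(m) = (id (x) Delta^(m-1)) o Delta.\<close>
primrec itcom :: "('b::finite, 'k::field) hopf_sc \<Rightarrow> nat \<Rightarrow> ('b \<Rightarrow> 'k) \<Rightarrow> 'b list \<Rightarrow> 'k" where
  "itcom H 0 u = (\<lambda>xs. if xs = [] then hcounit H u else 0)"
| "itcom H (Suc m) u = (\<lambda>xs. case xs of [] \<Rightarrow> 0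
      | i # ys \<Rightarrow> (if m = 0 then (if ys = [] then u i else 0)
                   else itcom H m (\<lambda>b. hcomul H u (i, b)) ys))"

text \<open>tprod H tau k [i_1,...,i_r] = tau^k(e_i1) tau^(k+1)(e_i2) ... tau^(k+r-1)(e_ir).\<close>
fun tprod :: "('b::finite, 'k::field) hopf_sc \<Rightarrow> (('b \<Rightarrow> 'k) \<Rightarrow> ('b \<Rightarrow> 'k)) \<Rightarrow> nat \<Rightarrow> 'b list \<Rightarrow> ('b \<Rightarrow> 'k)" where
  "tprod H \<tau> k [] = hunit H"
| "tprod H \<tau> k (i # ys) = hmul H ((\<tau> ^^ k) (bv i)) (tprod H \<tau> (Suc k) ys)"

text \<open>Twisted Hopf power h^[m,tau] = sum h_1 (tau h_2) ... (tau^(m-1) h_m).\<close>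
definition hpow_tw :: "('b::finite, 'k::field) hopf_sc \<Rightarrow> (('b \<Rightarrow> 'k) \<Rightarrow> ('b \<Rightarrow> 'k)) \<Rightarrow> nat \<Rightarrow> ('b \<Rightarrow> 'k) \<Rightarrow> ('b \<Rightarrow> 'k)" where
  "hpow_tw H \<tau> m u = (\<lambda>l. \<Sum>xs\<in>{xs. length xs = m}. itcom H m u xs * tprod H \<tau> 0 xs l)"

definition hpow :: "('b::finite, 'k::field) hopf_sc \<Rightarrow> nat \<Rightarrow> ('b \<Rightarrow> 'k) \<Rightarrow> ('b \<Rightarrow> 'k)" where
  "hpow H m u = hpow_tw H id m u"

text \<open>A module of dimension n is given by the matrices rho c of the basis elements.\<close>
definition rep_of :: "nat \<Rightarrow> ('c::finite \<Rightarrow> 'k::field mat) \<Rightarrow> ('c \<Rightarrow> 'k) \<Rightarrow> 'k mat" where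
  "rep_of n \<rho> u = mat n n (\<lambda>(r, s). \<Sum>c\<in>UNIV. u c * \<rho> c $$ (r, s))"

definition is_module :: "('b::finite, 'k::field) hopf_sc \<Rightarrow> nat \<Rightarrow> ('b \<Rightarrow> 'k mat) \<Rightarrow> bool" where
  "is_module H n \<rho> \<longleftrightarrow> (\<forall>c. \<rho> c \<in> carrier_mat n n) \<and> rep_of n \<rho> (hunit H) = 1\<^sub>m n \<and>
     (\<forall>u v. rep_of n \<rho> (hmul H u v) = rep_of n \<rho> u * rep_of n \<rho> v)"

definition mtrace :: "'k::comm_ring_1 mat \<Rightarrow> 'k" where
  "mtrace M = (\<Sum>i<dim_row M. M $$ (i, i))"

definition character :: "nat \<Rightarrow> ('c::finite \<Rightarrow> 'k::field mat) \<Rightarrow> ('c \<Rightarrow> 'k) \<Rightarrow> 'k" where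
  "character n \<rho> u = mtrace (rep_of n \<rho> u)"

text \<open>Indicators nu_m(V) = chi_V(Lambda^[m]) and nu_{m,tau}(W) = chi_W(Lambda^[m,tau]).\<close>
definition indicator :: "('b::finite, 'k::field) hopf_sc \<Rightarrow> nat \<Rightarrow> nat \<Rightarrow> ('b \<Rightarrow> 'k mat) \<Rightarrow> 'k" where
  "indicator H m n \<rho> = character n \<rho> (hpow H m (norm_integral H))"

definition tw_indicator :: "('b::finite, 'k::field) hopf_sc \<Rightarrow> (('b \<Rightarrow> 'k) \<Rightarrow> ('b \<Rightarrow> 'k)) \<Rightarrow> nat \<Rightarrow> nat \<Rightarrow> ('b \<Rightarrow> 'k mat) \<Rightarrow> 'k" where
  "tw_indicator H \<tau> m n \<rho> = character n \<rho> (hpow_tw H \<tau> m (norm_integral H))"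

text \<open>The action of g is the linear map with matrix alpha g: g . e_i = sum_j alpha g i j e_j.\<close>
definition actv :: "('g \<Rightarrow> 'b::finite \<Rightarrow> 'b \<Rightarrow> 'k::field) \<Rightarrow> 'g \<Rightarrow> ('b \<Rightarrow> 'k) \<Rightarrow> ('b \<Rightarrow> 'k)" where
  "actv \<alpha> g u = (\<lambda>j. \<Sum>i\<in>UNIV. u i * \<alpha> g i j)"

definition hopf_auto :: "('b::finite, 'k::field) hopf_sc \<Rightarrow> (('b \<Rightarrow> 'k) \<Rightarrow> ('b \<Rightarrow> 'k)) \<Rightarrow> bool" where
  "hopf_auto H f \<longleftrightarrow> bij f \<and>
     (\<forall>u v. f (hmul H u v) = hmul H (f u) (f v)) \<and> f (hunit H) = hunit H \<and>
     (\<forall>u. hcomul H (f u) = (\<lambda>(a, b). \<Sum>c\<in>UNIV. \<Sum>d\<in>UNIV. hcomul H u (c, d) * f (bv c) a * f (bv d) b)) \<and>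
     (\<forall>u. hcounit H (f u) = hcounit H u)"

definition hopf_action :: "('g, 'z) monoid_scheme \<Rightarrow> ('b::finite, 'k::field) hopf_sc \<Rightarrow> ('g \<Rightarrow> 'b \<Rightarrow> 'b \<Rightarrow> 'k) \<Rightarrow> bool" where
  "hopf_action G H \<alpha> \<longleftrightarrow> (\<forall>x\<in>carrier G. hopf_auto H (actv \<alpha> x)) \<and>
     actv \<alpha> \<one>\<^bsub>G\<^esub> = id \<and>
     (\<forall>x\<in>carrier G. \<forall>y\<in>carrier G. actv \<alpha> (x \<otimes>\<^bsub>G\<^esub> y) = actv \<alpha> x \<circ> actv \<alpha> y)"

text \<open>The smash coproduct K = A # k^G, with basis e_i # p_x.\<close>
definition smash :: "('b::finite, 'k::field) hopf_sc \<Rightarrow> ('g, 'z) monoid_scheme \<Rightarrow> ('g \<Rightarrow> 'b \<Rightarrow> 'b \<Rightarrow> 'k)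
    \<Rightarrow> ('b \<times> 'g, 'k) hopf_sc" where
  "smash H G \<alpha> = \<lparr>
     mulc = (\<lambda>(i, x) (j, y) (l, z). if x = y \<and> y = z then mulc H i j l else 0),
     unitc = (\<lambda>(i, x). unitc H i),
     comulc = (\<lambda>(i, x) (j, y) (l, z).
        if z = inv\<^bsub>G\<^esub> y \<otimes>\<^bsub>G\<^esub> x then (\<Sum>b\<in>UNIV. comulc H i j b * actv \<alpha> (inv\<^bsub>G\<^esub> y) (bv b) l) else 0),
     counitc = (\<lambda>(i, x). if x = \<one>\<^bsub>G\<^esub> then counitc H i else 0),
     antipc = (\<lambda>(i, x) (j, y). if y = inv\<^bsub>G\<^esub> x then actv \<alpha> (inv\<^bsub>G\<^esub> x) (hantip H (bv i)) j else 0) \<rparr>"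

text \<open>The elements p_x = 1 # p_x and a # 1 of K.\<close>
definition pK :: "('b::finite, 'k::field) hopf_sc \<Rightarrow> 'g \<Rightarrow> ('b \<times> 'g \<Rightarrow> 'k)" where
  "pK H x = (\<lambda>(i, y). if y = x then unitc H i else 0)"

definition aK :: "('b \<Rightarrow> 'k) \<Rightarrow> ('b \<times> 'g \<Rightarrow> 'k)" where
  "aK a = (\<lambda>(i, y). a i)"

definition alg_closed :: "'k::field itself \<Rightarrow> bool" where
  "alg_closed _ \<longleftrightarrow> (\<forall>p :: 'k poly. degree p > 0 \<longrightarrow> (\<exists>z. poly p z = 0))"

end

theory Submission
  imports Defs
begin


lemma sum_UNIV_prod: "(\<Sum>p\<in>(UNIV::('a::finite\<times>'c::finite) set). f p) = (\<Sum>a\<in>UNIV. \<Sum>c\<in>UNIV. f (a,c))"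
proof -
  have "(\<Sum>a\<in>UNIV. \<Sum>c\<in>UNIV. f (a,c)) = (\<Sum>(a,c)\<in>UNIV\<times>UNIV. f(a,c))" by (rule sum.cartesian_product)
  then show ?thesis by simp
qed

lemma hmul_lin_right: "hmul H a (\<lambda>l. \<Sum>s\<in>S. f s * v s l) = (\<lambda>l. \<Sum>s\<in>S. f s * hmul H a (v s) l)"
  unfolding hmul_def
  apply (rule ext)
  apply (simp add: sum_distrib_left sum_distrib_right)
  apply (subst sum.swap[where A=S])
  apply (rule sum.cong[OF refl])
  apply (subst sum.swap[where A=S])
  apply (rule sum.cong[OF refl])+
  by (simp add: ac_simps)

lemma hmul_lin_left: "hmul H (\<lambda>l. \<Sum>s\<in>S. f s * v s l) a = (\<lambda>l. \<Sum>s\<in>S. f s * hmul H (v s) a l)"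
  unfolding hmul_def
  apply (rule ext)
  apply (simp add: sum_distrib_left sum_distrib_right)
  apply (subst sum.swap[where A=S])
  apply (rule sum.cong[OF refl])
  apply (subst sum.swap[where A=S])
  apply (rule sum.cong[OF refl])+
  by (simp add: ac_simps)

lemma bv_mult[simp]: "(c::'k::field) * bv i j = (if j = i then c else 0)" "bv i j * c = (if j = i then c else 0)"
  by (simp_all add: bv_def)
declare sum.delta[simp] sum.delta'[simp]

lemma u_expand: "(\<lambda>l. \<Sum>i\<in>UNIV. u i * bv i l) = (u :: 'b::finite \<Rightarrow> 'k::field)"
  by (auto intro!: ext)

definition lin :: "(('b::finite \<Rightarrow> 'k::field) \<Rightarrow> ('x \<Rightarrow> 'k)) \<Rightarrow> bool" where
  "lin F \<longleftrightarrow> (\<forall>u. F u = (\<lambda>l. \<Sum>i\<in>UNIV. u i * F (bv i) l))"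

lemma linD: "lin F \<Longrightarrow> F u = (\<lambda>l. \<Sum>i\<in>UNIV. u i * F (bv i) l)"
  unfolding lin_def by (erule spec)

lemma linI: "(\<And>u. F u = (\<lambda>l. \<Sum>i\<in>UNIV. u i * F (bv i) l)) \<Longrightarrow> lin F"
  unfolding lin_def by blast

lemma lin_sum:
  assumes "lin F"
  shows "F (\<lambda>b. \<Sum>s\<in>S. f s * v s b) = (\<lambda>l. \<Sum>s\<in>S. f s * F (v s) l)"
proof -
  have "F (\<lambda>b. \<Sum>s\<in>S. f s * v s b) = (\<lambda>l. \<Sum>i\<in>UNIV. (\<Sum>s\<in>S. f s * v s i) * F (bv i) l)"
    by (rule linD[OF assms])
  also have "\<dots> = (\<lambda>l. \<Sum>s\<in>S. f s * (\<Sum>i\<in>UNIV. v s i * F (bv i) l))"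
    apply (rule ext)
    apply (simp only: sum_distrib_left sum_distrib_right)
    apply (subst sum.swap[where B=S])
    by (simp only: mult.assoc)
  also have "\<dots> = (\<lambda>l. \<Sum>s\<in>S. f s * F (v s) l)"
    by (subst (2) linD[OF assms]) (rule refl)
  finally show ?thesis .
qed

lemma lin_zero: assumes "lin F" shows "F (\<lambda>_. 0) = (\<lambda>_. 0)"
proof -
  have "F (\<lambda>_. 0) = (\<lambda>l. \<Sum>i\<in>UNIV. 0 * F (bv i) l)" by (rule linD[OF assms])
  then show ?thesis by simp
qed

lemma lin_comp: assumes "lin F" "lin G" shows "lin (F \<circ> G)"
proof (rule linI)
  fix u
  have "(F \<circ> G) u = F (\<lambda>b. \<Sum>i\<in>UNIV. u i * G (bv i) b)" by (simp add: linD[OF assms(2), of u, symmetric])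
  also have "\<dots> = (\<lambda>l. \<Sum>i\<in>UNIV. u i * (F \<circ> G) (bv i) l)"
    by (simp add: lin_sum[OF assms(1)])
  finally show "(F \<circ> G) u = (\<lambda>l. \<Sum>i\<in>UNIV. u i * (F \<circ> G) (bv i) l)" .
qed

lemma lin_id: "lin id"
  by (rule linI) (simp add: u_expand)

lemma lin_funpow: fixes F :: "('b::finite \<Rightarrow> 'k::field) \<Rightarrow> ('b \<Rightarrow> 'k)" assumes "lin F" shows "lin (F ^^ k)"
proof (induction k)
  case 0
  have "F ^^ 0 = id" by simp
  then show ?case using lin_id by metis
next
  case (Suc k)
  have "F ^^ Suc k = F \<circ> F ^^ k" by simp
  then show ?case using lin_comp[OF assms Suc] by metis
qed

lemma lin_hmul_right: "lin (hmul H a)"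
proof (rule linI)
  fix u
  have "hmul H a u = hmul H a (\<lambda>l. \<Sum>i\<in>UNIV. u i * bv i l)" by (simp only: u_expand)
  also have "\<dots> = (\<lambda>l. \<Sum>i\<in>UNIV. u i * hmul H a (bv i) l)" by (rule hmul_lin_right)
  finally show "hmul H a u = (\<lambda>l. \<Sum>i\<in>UNIV. u i * hmul H a (bv i) l)" .
qed

lemma lin_hmul_left: "lin (\<lambda>u. hmul H u a)"
proof (rule linI)
  fix u
  have "hmul H u a = hmul H (\<lambda>l. \<Sum>i\<in>UNIV. u i * bv i l) a" by (simp only: u_expand)
  also have "\<dots> = (\<lambda>l. \<Sum>i\<in>UNIV. u i * hmul H (bv i) a l)" by (rule hmul_lin_left)
  finally show "hmul H u a = (\<lambda>l. \<Sum>i\<in>UNIV. u i * hmul H (bv i) a l)" .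
qed

lemma lin_actv: "lin (actv \<alpha> g)"
  by (rule linI) (simp add: actv_def)

lemma hcomul_bv: "hcomul H (bv c) (i, b) = comulc H c i b"
  by (simp add: hcomul_def)

lemma itcom_lin: "itcom H m u xs = (\<Sum>c\<in>UNIV. u c * itcom H m (bv c) xs)"
proof (induction m arbitrary: u xs)
  case 0
  then show ?case by (simp add: hcounit_def sum_distrib_left)
next
  case (Suc m)
  show ?case
  proof (cases xs)
    case Nil then show ?thesis by simp
  next
    case (Cons i ys)
    show ?thesis
    proof (cases "m = 0")
      case True then show ?thesis using Cons by simp
    next
      case False
      have "itcom H (Suc m) u xs = itcom H m (\<lambda>b. hcomul H u (i, b)) ys" using Cons False by simp
      also have "\<dots> = (\<Sum>b\<in>UNIV. hcomul H u (i, b) * itcom H m (bv b) ys)" using Suc.IH by blast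
      also have "\<dots> = (\<Sum>b\<in>UNIV. \<Sum>c\<in>UNIV. u c * comulc H c i b * itcom H m (bv b) ys)"
        by (simp add: hcomul_def sum_distrib_right)
      also have "\<dots> = (\<Sum>c\<in>UNIV. u c * (\<Sum>b\<in>UNIV. hcomul H (bv c) (i, b) * itcom H m (bv b) ys))"
        apply (subst sum.swap)
        by (simp add: hcomul_bv sum_distrib_left mult.assoc)
      also have "\<dots> = (\<Sum>c\<in>UNIV. u c * itcom H m (\<lambda>b. hcomul H (bv c) (i, b)) ys)"
        using Suc.IH by metis
      finally show ?thesis using Cons False by simp
    qed
  qed
qed

definition Q :: "('b::finite,'k::field) hopf_sc \<Rightarrow> (('b\<Rightarrow>'k)\<Rightarrow>('b\<Rightarrow>'k)) \<Rightarrow> nat \<Rightarrow> nat \<Rightarrow> ('b \<Rightarrow> 'k) \<Rightarrow> ('b \<Rightarrow> 'k)" where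
  "Q H \<tau> k m u = (\<lambda>l. \<Sum>xs\<in>{xs. length xs = m}. itcom H m u xs * tprod H \<tau> k xs l)"

lemma hpow_tw_Q: "hpow_tw H \<tau> m u = Q H \<tau> 0 m u"
  by (simp add: hpow_tw_def Q_def)

lemma lists_Suc_sum:
  "(\<Sum>xs\<in>{xs::'b list. length xs = Suc m}. f xs) = (\<Sum>i\<in>UNIV. \<Sum>ys\<in>{ys. length ys = m}. f (i#ys))"
proof -
  have e: "{xs::'b list. length xs = Suc m} = (\<lambda>(i,ys). i#ys) ` (UNIV \<times> {ys. length ys = m})"
    by (auto simp: length_Suc_conv image_def)
  have inj: "inj_on (\<lambda>(i,ys). i#ys) (UNIV \<times> {ys::'b list. length ys = m})"
    by (auto simp: inj_on_def)
  show ?thesis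
    unfolding e sum.reindex[OF inj] sum.cartesian_product by (rule sum.cong) auto
qed

lemma Q_lin: "lin (Q H \<tau> k m)"
proof (rule linI)
  fix u
  show "Q H \<tau> k m u = (\<lambda>l. \<Sum>i\<in>UNIV. u i * Q H \<tau> k m (bv i) l)"
    unfolding Q_def
    apply (rule ext)
    apply (subst itcom_lin)
    apply (simp add: sum_distrib_left sum_distrib_right)
    apply (subst sum.swap)
    by (simp add: mult.assoc)
qed

lemma Q_one: "Q H \<tau> k 1 u = (\<lambda>l. \<Sum>i\<in>UNIV. u i * hmul H ((\<tau>^^k) (bv i)) (hunit H) l)"
  unfolding Q_def One_nat_def lists_Suc_sum by simp

lemma Q_Suc: assumes "m \<noteq> 0"
  shows "Q H \<tau> k (Suc m) u = (\<lambda>l. \<Sum>i\<in>UNIV. hmul H ((\<tau>^^k) (bv i)) (Q H \<tau> (Suc k) m (\<lambda>b. hcomul H u (i,b))) l)"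
  unfolding Q_def lists_Suc_sum using assms
  by (simp add: hmul_lin_right)

lemma Q_twist:
  assumes ha: "hopf_algebra H" and au: "hopf_auto H \<tau>" and lt: "lin \<tau>" and "m \<noteq> 0"
  shows "Q H \<tau> k m (\<tau> w) = Q H \<tau> (Suc k) m w"
  using assms(4)
proof (induction m arbitrary: k w)
  case 0 then show ?case by simp
next
  case (Suc m)
  have runit: "\<And>u. hmul H u (hunit H) = u" using ha unfolding hopf_algebra_def by blast
  have LT: "\<And>j. lin (\<tau>^^j)" by (rule lin_funpow[OF lt])
  show ?case
  proof (cases "m = 0")
    case True
    have "Q H \<tau> k (Suc m) (\<tau> w) = (\<lambda>l. \<Sum>i\<in>UNIV. (\<tau> w) i * (\<tau>^^k) (bv i) l)"
      using True by (simp add: Q_one[unfolded One_nat_def] runit)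
    also have "\<dots> = (\<tau>^^k) (\<tau> w)" by (rule linD[OF LT, symmetric])
    also have "\<dots> = (\<tau>^^Suc k) w" by (simp only: funpow_Suc_right o_def)
    also have "\<dots> = (\<lambda>l. \<Sum>i\<in>UNIV. w i * (\<tau>^^Suc k) (bv i) l)" by (rule linD[OF LT])
    also have "\<dots> = Q H \<tau> (Suc k) (Suc m) w" using True by (simp add: Q_one[unfolded One_nat_def] runit)
    finally show ?thesis .
  next
    case False
    note IH = Suc.IH[OF False]
    define W where "W = hcomul H w"
    define Q' where "Q' = Q H \<tau> (Suc (Suc k)) m"
    have cw: "\<And>i. (\<lambda>b. hcomul H (\<tau> w) (i,b)) = (\<lambda>b. \<Sum>p\<in>UNIV. (W p * \<tau> (bv (fst p)) i) * \<tau> (bv (snd p)) b)"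
      using au unfolding hopf_auto_def W_def by (auto simp: sum_UNIV_prod mult.assoc intro!: ext)
    have T: "\<And>c. (\<lambda>l'. \<Sum>i\<in>UNIV. \<tau> (bv c) i * (\<tau>^^k) (bv i) l') = (\<tau>^^Suc k) (bv c)"
      using linD[OF LT[of k], of "\<tau> (bv c)" for c] by (simp del: funpow.simps add: funpow_Suc_right)
    have "Q H \<tau> k (Suc m) (\<tau> w) = (\<lambda>l. \<Sum>i\<in>UNIV. hmul H ((\<tau>^^k) (bv i)) (Q H \<tau> (Suc k) m (\<lambda>b. hcomul H (\<tau> w) (i,b))) l)"
      by (rule Q_Suc[OF False])
    also have "\<dots> = (\<lambda>l. \<Sum>i\<in>UNIV. hmul H ((\<tau>^^k) (bv i)) (\<lambda>l'. \<Sum>p\<in>UNIV. (W p * \<tau> (bv (fst p)) i) * Q' (bv (snd p)) l') l)"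
      by (simp only: cw lin_sum[OF Q_lin] IH Q'_def)
    also have "\<dots> = (\<lambda>l. \<Sum>i\<in>UNIV. \<Sum>p\<in>UNIV. (W p * \<tau> (bv (fst p)) i) * hmul H ((\<tau>^^k) (bv i)) (Q' (bv (snd p))) l)"
      by (simp only: hmul_lin_right)
    also have "\<dots> = (\<lambda>l. \<Sum>p\<in>UNIV. W p * hmul H (\<lambda>l'. \<Sum>i\<in>UNIV. \<tau> (bv (fst p)) i * (\<tau>^^k) (bv i) l') (Q' (bv (snd p))) l)"
      apply (rule ext)
      apply (subst sum.swap)
      by (simp add: hmul_lin_left sum_distrib_left mult.assoc)
    also have "\<dots> = (\<lambda>l. \<Sum>p\<in>UNIV. W p * hmul H ((\<tau>^^Suc k) (bv (fst p))) (Q' (bv (snd p))) l)"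
      by (simp only: T)
    also have "\<dots> = (\<lambda>l. \<Sum>c\<in>UNIV. \<Sum>d\<in>UNIV. W (c,d) * hmul H ((\<tau>^^Suc k) (bv c)) (Q' (bv d)) l)"
      by (simp add: sum_UNIV_prod)
    also have "\<dots> = (\<lambda>l. \<Sum>c\<in>UNIV. hmul H ((\<tau>^^Suc k) (bv c)) (Q' (\<lambda>b. \<Sum>d\<in>UNIV. W (c,d) * bv d b)) l)"
      by (simp only: lin_sum[OF Q_lin] Q'_def hmul_lin_right)
    also have "\<dots> = Q H \<tau> (Suc k) (Suc m) w"
      by (simp only: Q_Suc[OF False] u_expand W_def Q'_def)
    finally show ?thesis .
  qed
qed

lemma smash_mul: "hmul (smash A G \<alpha>) U V (l,z) = hmul A (\<lambda>i. U(i,z)) (\<lambda>i. V(i,z)) l"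
proof -
  have mk: "mulc (smash A G \<alpha>) (i,x) (j,y) (l,z) = (if x = y \<and> y = z then mulc A i j l else 0)" for i x j y
    by (simp add: smash_def)
  have inner: "(\<Sum>y\<in>UNIV. U (i,x) * V (j,y) * mulc (smash A G \<alpha>) (i,x) (j,y) (l,z)) =
      (if x = z then U (i,z) * V (j,z) * mulc A i j l else 0)" for i x j
  proof -
    have "(\<lambda>y. U (i,x) * V (j,y) * mulc (smash A G \<alpha>) (i,x) (j,y) (l,z)) =
      (\<lambda>y. if y = z then (if x = z then U (i,z) * V (j,z) * mulc A i j l else 0) else 0)"
      by (auto simp: mk)
    then show ?thesis by (simp only:) simp
  qed
  have "hmul (smash A G \<alpha>) U V (l,z) =
    (\<Sum>i\<in>UNIV. \<Sum>x\<in>UNIV. \<Sum>j\<in>UNIV. \<Sum>y\<in>UNIV. U (i,x) * V (j,y) * mulc (smash A G \<alpha>) (i,x) (j,y) (l,z))"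
    by (simp only: hmul_def sum_UNIV_prod)
  also have "\<dots> = (\<Sum>i\<in>UNIV. \<Sum>x\<in>UNIV. \<Sum>j\<in>UNIV. if x = z then U (i,z) * V (j,z) * mulc A i j l else 0)"
    by (simp only: inner)
  also have "\<dots> = (\<Sum>i\<in>UNIV. \<Sum>x\<in>UNIV. if x = z then (\<Sum>j\<in>UNIV. U (i,z) * V (j,z) * mulc A i j l) else 0)"
    by (intro sum.cong refl) auto
  also have "\<dots> = hmul A (\<lambda>i. U(i,z)) (\<lambda>i. V(i,z)) l"
    by (simp add: hmul_def)
  finally show ?thesis .
qed

lemma smash_unit: "hunit (smash A G \<alpha>) (i,z) = hunit A i"
  by (simp add: hunit_def smash_def)

lemma tprod_id: "tprod H id k xs = tprod H id 0 xs"
proof (induction xs arbitrary: k)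
  case Nil then show ?case by simp
next
  case (Cons a xs)
  then show ?case by (metis tprod.simps(2) id_funpow)
qed

lemma Q_id: "Q H id k m = Q H id 0 m"
  unfolding Q_def by (subst tprod_id) (rule refl)

lemma actv_bv: "actv \<alpha> g (bv b) j = \<alpha> g b j"
  by (simp add: actv_def)

lemma smash_comul_slice:
  assumes gr: "group G" and cu: "carrier G = UNIV"
  shows "hcomul (smash A G \<alpha>) U ((i,y),(j, y [^]\<^bsub>G\<^esub> m)) =
    actv \<alpha> (inv\<^bsub>G\<^esub> y) (\<lambda>b. hcomul A (\<lambda>c. U(c, y [^]\<^bsub>G\<^esub> Suc m)) (i,b)) j"
proof -
  define x0 where "x0 = y [^]\<^bsub>G\<^esub> Suc m"
  define S where "S c = (\<Sum>b\<in>UNIV. comulc A c i b * actv \<alpha> (inv\<^bsub>G\<^esub> y) (bv b) j)" for c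
  have cond: "(y [^]\<^bsub>G\<^esub> m = inv\<^bsub>G\<^esub> y \<otimes>\<^bsub>G\<^esub> x) \<longleftrightarrow> x = x0" for x
    using group.inv_solve_left[OF gr, of "y [^]\<^bsub>G\<^esub> m" y x] monoid.nat_pow_Suc2[OF group.is_monoid[OF gr], of y m]
    by (simp add: cu x0_def)
  have "hcomul (smash A G \<alpha>) U ((i,y),(j, y [^]\<^bsub>G\<^esub> m)) =
      (\<Sum>c\<in>UNIV. \<Sum>x\<in>UNIV. U (c,x) * (if y [^]\<^bsub>G\<^esub> m = inv\<^bsub>G\<^esub> y \<otimes>\<^bsub>G\<^esub> x then S c else 0))"
    unfolding S_def by (simp add: hcomul_def smash_def sum_UNIV_prod)
  also have "\<dots> = (\<Sum>c\<in>UNIV. \<Sum>x\<in>UNIV. if x = x0 then U (c,x0) * S c else 0)"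
    by (intro sum.cong refl) (simp add: cond)
  also have "\<dots> = (\<Sum>c\<in>UNIV. U (c,x0) * S c)" by simp
  also have "\<dots> = actv \<alpha> (inv\<^bsub>G\<^esub> y) (\<lambda>b. hcomul A (\<lambda>c. U(c, x0)) (i,b)) j"
    unfolding S_def actv_bv
    apply (simp add: actv_def hcomul_def sum_distrib_left sum_distrib_right)
    apply (subst sum.swap)
    by (simp add: mult.assoc)
  finally show ?thesis by (simp add: x0_def)
qed

lemma Q_smash:
  assumes ha: "hopf_algebra A" and gr: "group G" and cu: "carrier G = UNIV"
    and act: "hopf_action G A \<alpha>" and "m \<noteq> 0"
  shows "Q (smash A G \<alpha>) id 0 m U (l,y) = Q A (actv \<alpha> (inv\<^bsub>G\<^esub> y)) 0 m (\<lambda>i. U(i, y [^]\<^bsub>G\<^esub> m)) l"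
  using assms(5)
proof (induction m arbitrary: U l y)
  case 0 then show ?case by simp
next
  case (Suc m)
  have runit: "\<And>u. hmul A u (hunit A) = u" using ha unfolding hopf_algebra_def by blast
  have slice_unit: "(\<lambda>i. hunit (smash A G \<alpha>) (i,z)) = hunit A" for z
    by (rule ext) (simp add: smash_unit)
  have Kunit: "hmul (smash A G \<alpha>) (bv c) (hunit (smash A G \<alpha>)) = bv c" for c
  proof -
    have "hmul (smash A G \<alpha>) (bv c) (hunit (smash A G \<alpha>)) (l,z) = bv c (l,z)" for l z
      unfolding smash_mul slice_unit runit by (rule refl)
    then show ?thesis by (simp add: fun_eq_iff)
  qed
  show ?case
  proof (cases "m = 0")
    case True
    have y1: "y [^]\<^bsub>G\<^esub> Suc 0 = y"
      using monoid.nat_pow_Suc[OF group.is_monoid[OF gr], of y 0] monoid.nat_pow_0[OF group.is_monoid[OF gr], of y]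
        monoid.l_one[OF group.is_monoid[OF gr], of y] cu by simp
    have "Q (smash A G \<alpha>) id 0 (Suc m) U (l,y) = (\<Sum>c\<in>UNIV. U c * bv c (l,y))"
      using True by (simp add: Q_one[unfolded One_nat_def] Kunit)
    also have "\<dots> = U (l,y)" by simp
    also have "\<dots> = Q A (actv \<alpha> (inv\<^bsub>G\<^esub> y)) 0 (Suc m) (\<lambda>i. U(i, y [^]\<^bsub>G\<^esub> Suc m)) l"
      using True y1 monoid.l_one[OF group.is_monoid[OF gr], of y] cu by (simp add: Q_one[unfolded One_nat_def] runit)
    finally show ?thesis .
  next
    case False
    note IH = Suc.IH[OF False]
    define \<tau> where "\<tau> = actv \<alpha> (inv\<^bsub>G\<^esub> y)"
    define V where "V = (\<lambda>c. U(c, y [^]\<^bsub>G\<^esub> Suc m))"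
    have au: "hopf_auto A \<tau>" using act cu unfolding hopf_action_def \<tau>_def by simp
    have lt: "lin \<tau>" unfolding \<tau>_def by (rule lin_actv)
    have slice_bv: "(\<lambda>i'. bv (i,z) (i',y)) = (if z = y then bv i else (\<lambda>_. 0))" for i z
      by (auto simp: bv_def intro!: ext)
    have hz: "hmul A (\<lambda>_. 0) X = (\<lambda>_. 0)" for X
      using lin_zero[OF lin_hmul_left[of A X]] by simp
    have step: "(\<Sum>z\<in>UNIV. hmul A (\<lambda>i'. bv (i,z) (i',y)) (X z) l) = hmul A (bv i) (X y) l" for i X
    proof -
      have s1: "(\<lambda>i'. bv (i,y) (i',y)) = bv i" by (auto simp: bv_def intro!: ext)
      have s2: "z \<noteq> y \<Longrightarrow> (\<lambda>i'. bv (i,z) (i',y)) = (\<lambda>_. 0)" for z by (auto simp: bv_def intro!: ext)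
      have "hmul A (\<lambda>i'. bv (i,z) (i',y)) (X z) l = (if z = y then hmul A (bv i) (X y) l else 0)" for z
      proof (cases "z = y")
        case True then show ?thesis by (simp only: s1 if_True refl simp_thms)
      next
        case False then show ?thesis by (simp only: s2[OF False] hz if_False)
      qed
      then show ?thesis by simp
    qed
    have "Q (smash A G \<alpha>) id 0 (Suc m) U (l,y) =
      (\<Sum>c\<in>UNIV. hmul (smash A G \<alpha>) (bv c) (Q (smash A G \<alpha>) id 0 m (\<lambda>b. hcomul (smash A G \<alpha>) U (c,b))) (l,y))"
      by (simp only: Q_Suc[OF False] Q_id[where k="Suc 0"] funpow_0)
    also have "\<dots> = (\<Sum>i\<in>UNIV. \<Sum>z\<in>UNIV. hmul A (\<lambda>i'. bv (i,z) (i',y))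
        (\<lambda>j. Q (smash A G \<alpha>) id 0 m (\<lambda>b. hcomul (smash A G \<alpha>) U ((i,z),b)) (j,y)) l)"
      by (simp only: sum_UNIV_prod smash_mul)
    also have "\<dots> = (\<Sum>i\<in>UNIV. hmul A (bv i)
        (\<lambda>j. Q (smash A G \<alpha>) id 0 m (\<lambda>b. hcomul (smash A G \<alpha>) U ((i,y),b)) (j,y)) l)"
      by (simp only: step)
    also have "\<dots> = (\<Sum>i\<in>UNIV. hmul A (bv i)
        (Q A \<tau> 0 m (\<lambda>j. hcomul (smash A G \<alpha>) U ((i,y),(j, y [^]\<^bsub>G\<^esub> m)))) l)"
      by (simp only: IH \<tau>_def)
    also have "\<dots> = (\<Sum>i\<in>UNIV. hmul A (bv i) (Q A \<tau> 0 m (\<tau> (\<lambda>b. hcomul A V (i,b)))) l)"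
      by (simp only: smash_comul_slice[OF gr cu] \<tau>_def V_def)
    also have "\<dots> = (\<Sum>i\<in>UNIV. hmul A (bv i) (Q A \<tau> (Suc 0) m (\<lambda>b. hcomul A V (i,b))) l)"
      by (simp only: Q_twist[OF ha au lt False])
    also have "\<dots> = Q A \<tau> 0 (Suc m) V l"
      by (simp only: Q_Suc[OF False] funpow_0)
    finally show ?thesis by (simp only: \<tau>_def V_def)
  qed
qed

definition is_int :: "('b::finite, 'k::field) hopf_sc \<Rightarrow> ('b \<Rightarrow> 'k) \<Rightarrow> bool" where
  "is_int H L \<longleftrightarrow> (\<forall>a. hmul H a L = (\<lambda>j. hcounit H a * L j)) \<and>
                            (\<forall>a. hmul H L a = (\<lambda>j. hcounit H a * L j)) \<and> hcounit H L = 1"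

lemma norm_integral_eq: assumes "is_int H L" shows "norm_integral H = L"
  unfolding norm_integral_def
proof (rule the_equality)
  show "(\<forall>a. hmul H a L = (\<lambda>j. hcounit H a * L j)) \<and>
          (\<forall>a. hmul H L a = (\<lambda>j. hcounit H a * L j)) \<and> hcounit H L = 1"
    using assms unfolding is_int_def .
next
  fix L' assume L': "(\<forall>a. hmul H a L' = (\<lambda>j. hcounit H a * L' j)) \<and>
          (\<forall>a. hmul H L' a = (\<lambda>j. hcounit H a * L' j)) \<and> hcounit H L' = 1"
  have h1: "hmul H L L' = (\<lambda>j. hcounit H L * L' j)" using L' by blast
  have h2: "hmul H L L' = (\<lambda>j. hcounit H L' * L j)" using assms unfolding is_int_def by blast
  have e: "hcounit H L = 1" "hcounit H L' = 1" using assms L' unfolding is_int_def by blast+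
  show "L' = L" using h1 h2 e by simp
qed

lemma hmul_scale_right: "hmul H a (\<lambda>j. c * u j) = (\<lambda>j. c * hmul H a u j)"
  by (simp add: hmul_def sum_distrib_left ac_simps)
lemma hmul_scale_left: "hmul H (\<lambda>j. c * u j) a = (\<lambda>j. c * hmul H u a j)"
  by (simp add: hmul_def sum_distrib_left ac_simps)
lemma hmul_add_right: "hmul H a (\<lambda>j. u j + v j) = (\<lambda>j. hmul H a u j + hmul H a v j)"
  by (simp add: hmul_def sum.distrib algebra_simps)
lemma hmul_add_left: "hmul H (\<lambda>j. u j + v j) a = (\<lambda>j. hmul H u a j + hmul H v a j)"
  by (simp add: hmul_def sum.distrib algebra_simps)
lemma hcounit_add: "hcounit H (\<lambda>j. u j + v j) = hcounit H u + hcounit H v"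
  by (simp add: hcounit_def sum.distrib algebra_simps)
lemma hcounit_scale: "hcounit H (\<lambda>j. c * u j) = c * hcounit H u"
  by (simp add: hcounit_def sum_distrib_left ac_simps)

lemma hcounit_zero: "hcounit H (\<lambda>j. 0) = 0"
  by (simp add: hcounit_def)

lemma ssD:
  assumes s: "semisimple H" and l: "left_ideal H I"
  shows "\<exists>J. left_ideal H J \<and> I \<inter> J = {\<lambda>j. 0} \<and> (\<forall>v. \<exists>a\<in>I. \<exists>b\<in>J. v = (\<lambda>j. a j + b j))"
proof -
  from s have "\<forall>I. left_ideal H I \<longrightarrow>
     (\<exists>J. left_ideal H J \<and> I \<inter> J = {\<lambda>j. 0} \<and> (\<forall>v. \<exists>a\<in>I. \<exists>b\<in>J. v = (\<lambda>j. a j + b j)))"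
    by (simp only: semisimple_def)
  then have "left_ideal H I \<longrightarrow>
     (\<exists>J. left_ideal H J \<and> I \<inter> J = {\<lambda>j. 0} \<and> (\<forall>v. \<exists>a\<in>I. \<exists>b\<in>J. v = (\<lambda>j. a j + b j)))"
    by (rule spec)
  then show ?thesis using l by (rule mp)
qed

lemma exists_integral:
  assumes ha: "hopf_algebra A" and ss: "semisimple A"
  shows "\<exists>L. is_int A L"
proof -
  have assoc: "\<And>u v w. hmul A (hmul A u v) w = hmul A u (hmul A v w)"
    and runit: "\<And>u. hmul A u (hunit A) = u"
    and emul: "\<And>u v. hcounit A (hmul A u v) = hcounit A u * hcounit A v"
    and e1: "hcounit A (hunit A) = 1"
    using ha unfolding hopf_algebra_def by blast+
  define I where "I = {u. hcounit A u = 0}"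
  have "left_ideal A I"
    unfolding left_ideal_def I_def by (simp add: hcounit_add hcounit_scale emul hcounit_zero)
  then obtain J where J: "left_ideal A J" "I \<inter> J = {\<lambda>j. 0}" "\<forall>v. \<exists>a\<in>I. \<exists>b\<in>J. v = (\<lambda>j. a j + b j)"
    using ssD[OF ss \<open>left_ideal A I\<close>] by blast
  obtain e f where ef: "e \<in> I" "f \<in> J" "hunit A = (\<lambda>j. e j + f j)" using J(3) by blast
  have ef1: "hcounit A f = 1" using ef e1 by (simp add: hcounit_add I_def)
  have Jadd: "\<And>u v. u \<in> J \<Longrightarrow> v \<in> J \<Longrightarrow> (\<lambda>j. u j + v j) \<in> J"
    and Jsc: "\<And>u c. u \<in> J \<Longrightarrow> (\<lambda>j. c * u j) \<in> J"
    and Jmul: "\<And>u a. u \<in> J \<Longrightarrow> hmul A a u \<in> J"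
    using J(1) unfolding left_ideal_def by blast+
  have left: "hmul A a f = (\<lambda>j. hcounit A a * f j)" for a
  proof -
    define g where "g = (\<lambda>j. hmul A a f j + (- hcounit A a) * f j)"
    have "g \<in> J" unfolding g_def by (rule Jadd[OF Jmul[OF ef(2)] Jsc[OF ef(2)]])
    moreover have "g \<in> I" unfolding g_def I_def mem_Collect_eq by (simp only: hcounit_add hcounit_scale emul ef1) simp
    ultimately have g0: "g = (\<lambda>j. 0)" using J(2) by blast
    show ?thesis
    proof (rule ext)
      fix j
      have "hmul A a f j + (- hcounit A a) * f j = 0" using fun_cong[OF g0, of j] unfolding g_def by simp
      then show "hmul A a f j = hcounit A a * f j" by simp
    qed
  qed
  define \<Lambda> where "\<Lambda> = f"
  have right: "hmul A \<Lambda> a = (\<lambda>j. hcounit A a * \<Lambda> j)" for a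
  proof -
    define t where "t = (\<lambda>j. hmul A \<Lambda> a j + (- hcounit A a) * \<Lambda> j)"
    have tl: "hmul A b t = (\<lambda>j. hcounit A b * t j)" for b
    proof -
      have "hmul A b t = (\<lambda>j. hmul A (hmul A b \<Lambda>) a j + (- hcounit A a) * hmul A b \<Lambda> j)"
        unfolding t_def by (simp only: hmul_add_right hmul_scale_right assoc)
      also have "\<dots> = (\<lambda>j. hcounit A b * hmul A \<Lambda> a j + (- hcounit A a) * (hcounit A b * \<Lambda> j))"
        by (simp only: \<Lambda>_def left hmul_scale_left)
      also have "\<dots> = (\<lambda>j. hcounit A b * t j)"
        unfolding t_def by (simp add: algebra_simps)
      finally show ?thesis .
    qed
    have eL: "hcounit A \<Lambda> = 1" using ef1 by (simp add: \<Lambda>_def)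
    have te: "hcounit A t = 0"
      unfolding t_def by (simp only: hcounit_add hcounit_scale emul eL) simp
    define L where "L = {v. \<exists>c. v = (\<lambda>j. c * t j)}"
    have Lmem: "(\<lambda>j. c * t j) \<in> L" for c unfolding L_def by blast
    have LE: "v \<in> L \<Longrightarrow> \<exists>c. v = (\<lambda>j. c * t j)" for v unfolding L_def by blast
    have Ladd: "u \<in> L \<Longrightarrow> v \<in> L \<Longrightarrow> (\<lambda>j. u j + v j) \<in> L" for u v
    proof -
      assume "u \<in> L" "v \<in> L"
      then obtain c1 c2 where "u = (\<lambda>j. c1 * t j)" "v = (\<lambda>j. c2 * t j)" using LE by blast
      then have "(\<lambda>j. u j + v j) = (\<lambda>j. (c1 + c2) * t j)" by (simp add: algebra_simps)
      then show ?thesis using Lmem by simp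
    qed
    have Lsc: "u \<in> L \<Longrightarrow> (\<lambda>j. c * u j) \<in> L" for u c
    proof -
      assume "u \<in> L"
      then obtain c1 where "u = (\<lambda>j. c1 * t j)" using LE by blast
      then have "(\<lambda>j. c * u j) = (\<lambda>j. (c * c1) * t j)" by (simp add: algebra_simps)
      then show ?thesis using Lmem by simp
    qed
    have Lmul: "u \<in> L \<Longrightarrow> hmul A b u \<in> L" for u b
    proof -
      assume "u \<in> L"
      then obtain c1 where "u = (\<lambda>j. c1 * t j)" using LE by blast
      then have "hmul A b u = (\<lambda>j. (c1 * hcounit A b) * t j)" by (simp add: hmul_scale_right tl algebra_simps)
      then show ?thesis using Lmem by simp
    qed
    have L0: "(\<lambda>j. 0) \<in> L" using Lmem[of 0] by simp
    have "left_ideal A L"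
      unfolding left_ideal_def using L0 Ladd Lsc Lmul by blast
    then obtain L' where L': "left_ideal A L'" "L \<inter> L' = {\<lambda>j. 0}" "\<forall>v. \<exists>a\<in>L. \<exists>b\<in>L'. v = (\<lambda>j. a j + b j)"
      using ssD[OF ss \<open>left_ideal A L\<close>] by blast
    obtain l l' where ll: "l \<in> L" "l' \<in> L'" "hunit A = (\<lambda>j. l j + l' j)" using L'(3) by blast
    have L'c: "\<And>u a. u \<in> L' \<Longrightarrow> hmul A a u \<in> L'"
      using L'(1) unfolding left_ideal_def by blast
    have tsplit: "t = (\<lambda>j. hmul A t l j + hmul A t l' j)"
    proof -
      have "t = hmul A t (hunit A)" by (simp only: runit)
      also have "\<dots> = (\<lambda>j. hmul A t l j + hmul A t l' j)" by (simp only: ll(3) hmul_add_right)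
      finally show ?thesis .
    qed
    have tL: "t \<in> L" using Lmem[of 1] by simp
    have "hmul A t l' = (\<lambda>j. t j + (-1) * hmul A t l j)"
    proof (rule ext)
      fix j show "hmul A t l' j = t j + (-1) * hmul A t l j"
        using fun_cong[OF tsplit, of j] by simp
    qed
    also have "\<dots> \<in> L" by (rule Ladd[OF tL Lsc[OF Lmul[OF ll(1)]]])
    finally have "hmul A t l' \<in> L" .
    moreover have "hmul A t l' \<in> L'" using L'c[OF ll(2)] .
    ultimately have z: "hmul A t l' = (\<lambda>j. 0)" using L'(2) by blast
    obtain c where lc: "l = (\<lambda>j. c * t j)" using LE[OF ll(1)] by blast
    have "t = hmul A t l" using tsplit z by simp
    also have "\<dots> = (\<lambda>j. c * hmul A t t j)" unfolding lc by (rule hmul_scale_right)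
    also have "\<dots> = (\<lambda>j. 0)" by (simp add: tl te)
    finally have t0: "t = (\<lambda>j. 0)" .
    show ?thesis
    proof (rule ext)
      fix j
      have "hmul A \<Lambda> a j + (- hcounit A a) * \<Lambda> j = 0" using fun_cong[OF t0, of j] unfolding t_def by simp
      then show "hmul A \<Lambda> a j = hcounit A a * \<Lambda> j" by simp
    qed
  qed
  have "is_int A \<Lambda>"
    unfolding is_int_def using left right ef1 by (simp add: \<Lambda>_def)
  then show ?thesis by blast
qed



lemma mtrace_comm:
  assumes A: "A \<in> carrier_mat n m" and B: "B \<in> carrier_mat m n"
  shows "mtrace (A * B) = mtrace (B * A)"
proof -
  have "mtrace (A * B) = (\<Sum>i<n. \<Sum>k<m. A $$ (i,k) * B $$ (k,i))"
    using A B unfolding mtrace_def by (simp add: scalar_prod_def lessThan_atLeast0)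
  also have "\<dots> = (\<Sum>k<m. \<Sum>i<n. B $$ (k,i) * A $$ (i,k))"
    by (subst sum.swap) (simp add: mult.commute)
  also have "\<dots> = mtrace (B * A)"
    using A B unfolding mtrace_def by (simp add: scalar_prod_def lessThan_atLeast0)
  finally show ?thesis .
qed

lemma col_unit: fixes P :: "'k::field mat" assumes "P \<in> carrier_mat n n" "j < n" shows "P *\<^sub>v unit_vec n j = col P j"
proof -
  have e: "P * 1\<^sub>m n = P" by (rule right_mult_one_mat[OF assms(1)])
  have "col (P * 1\<^sub>m n) j = P *\<^sub>v col (1\<^sub>m n) j" by (rule col_mult2[OF assms(1) one_carrier_mat assms(2)])
  then show ?thesis using e assms(2) by simp
qed

lemma trace_proj:
  fixes R P \<iota> S :: "'k::field mat"
  assumes R: "R \<in> carrier_mat n n" and P: "P \<in> carrier_mat n n" and I: "\<iota> \<in> carrier_mat n d"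
    and S: "S \<in> carrier_mat d d" and PP: "P * P = P" and RI: "R * \<iota> = \<iota> * S"
    and inj: "\<And>w w'. w \<in> carrier_vec d \<Longrightarrow> w' \<in> carrier_vec d \<Longrightarrow> \<iota> *\<^sub>v w = \<iota> *\<^sub>v w' \<Longrightarrow> w = w'"
    and img: "{P *\<^sub>v v | v. v \<in> carrier_vec n} = {\<iota> *\<^sub>v w | w. w \<in> carrier_vec d}"
  shows "mtrace (R * P) = mtrace S"
proof -
  have "\<forall>j. \<exists>w. j < n \<longrightarrow> w \<in> carrier_vec d \<and> P *\<^sub>v unit_vec n j = \<iota> *\<^sub>v w"
  proof (intro allI)
    fix j
    have "P *\<^sub>v unit_vec n j \<in> {P *\<^sub>v v | v. v \<in> carrier_vec n}" by auto
    then show "\<exists>w. j < n \<longrightarrow> w \<in> carrier_vec d \<and> P *\<^sub>v unit_vec n j = \<iota> *\<^sub>v w" unfolding img by auto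
  qed
  then obtain W where W: "\<And>j. j < n \<Longrightarrow> W j \<in> carrier_vec d \<and> P *\<^sub>v unit_vec n j = \<iota> *\<^sub>v W j"
    by metis
  define \<pi> where "\<pi> = mat d n (\<lambda>(r,j). W j $ r)"
  have pi: "\<pi> \<in> carrier_mat d n" unfolding \<pi>_def by simp
  have colpi: "col \<pi> j = W j" if "j < n" for j
    using W[OF that] that unfolding \<pi>_def by (auto intro!: eq_vecI)
  have IP: "\<iota> * \<pi> = P"
  proof (rule mat_col_eqI)
    fix j assume "j < dim_col P"
    then have j: "j < n" using P by simp
    have "col (\<iota> * \<pi>) j = \<iota> *\<^sub>v W j" using col_mult2[OF I pi j] colpi[OF j] by simp
    also have "\<dots> = P *\<^sub>v unit_vec n j" using W[OF j] by simp
    also have "\<dots> = col P j" using col_unit[OF P j] .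
    finally show "col (\<iota> * \<pi>) j = col P j" .
  qed (use I pi P in auto)
  have Pfix: "P *\<^sub>v (\<iota> *\<^sub>v u) = \<iota> *\<^sub>v u" if u: "u \<in> carrier_vec d" for u
  proof -
    have "\<iota> *\<^sub>v u \<in> {P *\<^sub>v v | v. v \<in> carrier_vec n}" unfolding img using u by auto
    then obtain v where v: "v \<in> carrier_vec n" "\<iota> *\<^sub>v u = P *\<^sub>v v" by auto
    have "P *\<^sub>v (P *\<^sub>v v) = (P * P) *\<^sub>v v" using P v by (simp add: assoc_mult_mat_vec)
    then show ?thesis using v PP by simp
  qed
  have PI: "P * \<iota> = \<iota>"
  proof (rule mat_col_eqI)
    fix j assume "j < dim_col \<iota>"
    then have j: "j < d" using I by simp
    have ci: "col \<iota> j = \<iota> *\<^sub>v unit_vec d j"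
      using col_mult2[OF I one_carrier_mat j] right_mult_one_mat[OF I] j by simp
    have "col (P * \<iota>) j = P *\<^sub>v col \<iota> j" by (rule col_mult2[OF P I j])
    also have "\<dots> = col \<iota> j" unfolding ci by (rule Pfix) simp
    finally show "col (P * \<iota>) j = col \<iota> j" .
  qed (use I P in auto)
  have piI: "\<pi> * \<iota> = 1\<^sub>m d"
  proof (rule mat_col_eqI)
    fix j assume "j < dim_col (1\<^sub>m d :: 'k mat)"
    then have j: "j < d" by simp
    have "\<iota> *\<^sub>v col (\<pi> * \<iota>) j = col (\<iota> * (\<pi> * \<iota>)) j"
      using col_mult2[OF I mult_carrier_mat[OF pi I] j] by simp
    also have "\<iota> * (\<pi> * \<iota>) = \<iota> * \<pi> * \<iota>" using I pi by (simp add: assoc_mult_mat)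
    also have "\<dots> = \<iota>" using IP PI by simp
    also have "col \<iota> j = \<iota> *\<^sub>v col (1\<^sub>m d) j"
      using col_mult2[OF I one_carrier_mat j] right_mult_one_mat[OF I] j by simp
    finally have "\<iota> *\<^sub>v col (\<pi> * \<iota>) j = \<iota> *\<^sub>v col (1\<^sub>m d) j" .
    moreover have "col (\<pi> * \<iota>) j \<in> carrier_vec d" using pi I by (simp add: carrier_vecI)
    moreover have "col (1\<^sub>m d) j \<in> carrier_vec d" by (simp add: carrier_vecI)
    ultimately show "col (\<pi> * \<iota>) j = col (1\<^sub>m d) j" using inj by blast
  qed (use I pi in auto)
  have "mtrace (R * P) = mtrace (R * \<iota> * \<pi>)" using R I pi IP by (simp add: assoc_mult_mat)
  also have "\<dots> = mtrace (\<iota> * (S * \<pi>))" using RI I S pi by (simp add: assoc_mult_mat)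
  also have "\<dots> = mtrace ((S * \<pi>) * \<iota>)" by (rule mtrace_comm) (use I S pi in auto)
  also have "\<dots> = mtrace (S * (\<pi> * \<iota>))" using I S pi by (simp add: assoc_mult_mat)
  also have "\<dots> = mtrace S" using piI S by simp
  finally show ?thesis .
qed



definition sm :: "('b \<Rightarrow> 'k::zero) \<Rightarrow> 'g \<Rightarrow> ('b \<times> 'g \<Rightarrow> 'k)" where
  "sm v y = (\<lambda>(i,z). if z = y then v i else 0)"

lemma sm_slice: "(\<lambda>i. sm v y (i,z)) = (if z = y then v else (\<lambda>_. 0))"
  by (auto simp: sm_def)

lemma if_mult0: "(if P then a else 0) * (b::'k::field) = (if P then a * b else 0)" by simp

lemma char_formula: "character n \<rho> U = (\<Sum>r<n. \<Sum>c\<in>UNIV. U c * \<rho> c $$ (r,r))"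
  unfolding character_def mtrace_def rep_of_def by (intro sum.cong) auto

lemma char_lin: "character n \<rho> (U :: 'c::finite \<Rightarrow> 'k::field) = (\<Sum>c\<in>UNIV. U c * character n \<rho> (bv c))"
  unfolding char_formula
  by (simp add: sum_distrib_left) (subst sum.swap, simp add: mult.assoc)

lemma char_zero: "character n \<rho> (\<lambda>_. 0 :: 'k::field) = 0"
  by (simp add: char_formula)

lemma char_decomp:
  "character n \<rho> (U :: 'b::finite \<times> 'g::finite \<Rightarrow> 'k::field) = (\<Sum>y\<in>UNIV. character n \<rho> (sm (\<lambda>i. U(i,y)) y))"
proof -
  have "(\<Sum>y\<in>UNIV. character n \<rho> (sm (\<lambda>i. U(i,y)) y)) =
      (\<Sum>y\<in>UNIV. \<Sum>i\<in>UNIV. \<Sum>x\<in>UNIV. sm (\<lambda>i. U(i,y)) y (i,x) * character n \<rho> (bv (i,x)))"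
    by (subst char_lin) (simp only: sum_UNIV_prod)
  also have "\<dots> = (\<Sum>y\<in>UNIV. \<Sum>i\<in>UNIV. U (i,y) * character n \<rho> (bv (i,y)))"
    by (simp add: sm_def if_mult0)
  also have "\<dots> = (\<Sum>i\<in>UNIV. \<Sum>y\<in>UNIV. U (i,y) * character n \<rho> (bv (i,y)))"
    by (rule sum.swap)
  also have "\<dots> = character n \<rho> U"
    by (subst (2) char_lin) (simp only: sum_UNIV_prod)
  finally show ?thesis by simp
qed

lemma slice_aK: "(\<lambda>i. aK a (i,z)) = a" by (simp add: aK_def)
lemma slice_pK: "(\<lambda>i. pK A y (i,z)) = (if z = y then hunit A else (\<lambda>_. 0))"
  by (auto simp: pK_def hunit_def)

lemma hmul_zero_left: "hmul H (\<lambda>_. 0) X = (\<lambda>_. 0)"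
  using lin_zero[OF lin_hmul_left[of H X]] by simp
lemma hmul_zero_right: "hmul H X (\<lambda>_. 0) = (\<lambda>_. 0)"
  using lin_zero[OF lin_hmul_right[of H X]] by simp

lemma aK_pK:
  assumes runit: "\<And>u. hmul A u (hunit A) = u"
  shows "hmul (smash A G \<alpha>) (aK a) (pK A y) = sm a y"
proof -
  have "hmul (smash A G \<alpha>) (aK a) (pK A y) (l,z) = sm a y (l,z)" for l z
    unfolding smash_mul slice_aK slice_pK
    by (cases "z = y") (simp_all add: runit hmul_zero_right sm_def)
  then show ?thesis by (simp add: fun_eq_iff)
qed

lemma pK_pK:
  assumes runit: "\<And>u. hmul A u (hunit A) = u"
  shows "hmul (smash A G \<alpha>) (pK A y) (pK A y) = pK A y"
proof -
  have "hmul (smash A G \<alpha>) (pK A y) (pK A y) (l,z) = pK A y (l,z)" for l z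
  proof -
    have "hmul (smash A G \<alpha>) (pK A y) (pK A y) (l,z) = hmul A (\<lambda>i. pK A y (i,z)) (\<lambda>i. pK A y (i,z)) l"
      by (rule smash_mul)
    also have "\<dots> = pK A y (l,z)"
      unfolding slice_pK by (cases "z = y") (simp_all only: runit hmul_zero_right if_True if_False simp_thms, simp_all add: pK_def hunit_def)
    finally show ?thesis .
  qed
  then show ?thesis by (simp add: fun_eq_iff)
qed

lemma rep_carrier: "rep_of n \<rho> u \<in> carrier_mat n n"
  by (simp add: rep_of_def)

lemma char_slice:
  assumes runit: "\<And>u. hmul A u (hunit A) = u"
    and modK: "is_module (smash A G \<alpha>) n \<rho>" and modA: "is_module A d \<sigma>'"
    and I: "\<iota> \<in> carrier_mat n d"
    and inj: "\<And>w w'. w \<in> carrier_vec d \<Longrightarrow> w' \<in> carrier_vec d \<Longrightarrow> \<iota> *\<^sub>v w = \<iota> *\<^sub>v w' \<Longrightarrow> w = w'"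
    and img: "{rep_of n \<rho> (pK A y) *\<^sub>v v | v. v \<in> carrier_vec n} = {\<iota> *\<^sub>v w | w. w \<in> carrier_vec d}"
    and inter: "\<And>a. rep_of n \<rho> (aK a) * \<iota> = \<iota> * rep_of d \<sigma>' a"
  shows "character n \<rho> (sm a y) = character d \<sigma>' a"
proof -
  have mul: "\<And>u v. rep_of n \<rho> (hmul (smash A G \<alpha>) u v) = rep_of n \<rho> u * rep_of n \<rho> v"
    using modK unfolding is_module_def by blast
  have ap: "hmul (smash A G \<alpha>) (aK a) (pK A y) = sm a y" by (rule aK_pK[OF runit])
  have f1: "rep_of n \<rho> (sm a y) = rep_of n \<rho> (aK a) * rep_of n \<rho> (pK A y)"
    using mul[of "aK a" "pK A y"] unfolding ap .
  have PP: "rep_of n \<rho> (pK A y) * rep_of n \<rho> (pK A y) = rep_of n \<rho> (pK A y)"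
    using mul[of "pK A y" "pK A y"] unfolding pK_pK[OF runit] by (rule sym)
  have "mtrace (rep_of n \<rho> (aK a) * rep_of n \<rho> (pK A y)) = mtrace (rep_of d \<sigma>' a)"
    by (rule trace_proj[OF rep_carrier rep_carrier I rep_carrier PP inter inj img])
  then show ?thesis unfolding character_def f1 .
qed

lemma smash_counit: "hcounit (smash A G \<alpha>) U = hcounit A (\<lambda>i. U(i, \<one>\<^bsub>G\<^esub>))"
proof -
  have "hcounit (smash A G \<alpha>) U = (\<Sum>i\<in>UNIV. \<Sum>x\<in>UNIV. U (i,x) * (if x = \<one>\<^bsub>G\<^esub> then counitc A i else 0))"
    by (simp add: hcounit_def smash_def sum_UNIV_prod)
  also have "\<dots> = (\<Sum>i\<in>UNIV. \<Sum>x\<in>UNIV. if x = \<one>\<^bsub>G\<^esub> then U (i,x) * counitc A i else 0)"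
    by (intro sum.cong refl) simp
  also have "\<dots> = hcounit A (\<lambda>i. U(i, \<one>\<^bsub>G\<^esub>))" by (simp add: hcounit_def)
  finally show ?thesis .
qed

lemma smash_int:
  assumes "is_int A \<Lambda>"
  shows "is_int (smash A G \<alpha>) (sm \<Lambda> \<one>\<^bsub>G\<^esub>)"
proof -
  have l: "hmul A a \<Lambda> = (\<lambda>j. hcounit A a * \<Lambda> j)" and r: "hmul A \<Lambda> a = (\<lambda>j. hcounit A a * \<Lambda> j)"
    and e: "hcounit A \<Lambda> = 1" for a using assms unfolding is_int_def by blast+
  have L: "hmul (smash A G \<alpha>) a (sm \<Lambda> \<one>\<^bsub>G\<^esub>) = (\<lambda>j. hcounit (smash A G \<alpha>) a * sm \<Lambda> \<one>\<^bsub>G\<^esub> j)" for a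
  proof -
    have "hmul (smash A G \<alpha>) a (sm \<Lambda> \<one>\<^bsub>G\<^esub>) (l,z) = hcounit (smash A G \<alpha>) a * sm \<Lambda> \<one>\<^bsub>G\<^esub> (l,z)" for l z
      unfolding smash_mul sm_slice smash_counit
      by (cases "z = \<one>\<^bsub>G\<^esub>") (simp_all add: l hmul_zero_right sm_def)
    then show ?thesis by (simp add: fun_eq_iff)
  qed
  have R: "hmul (smash A G \<alpha>) (sm \<Lambda> \<one>\<^bsub>G\<^esub>) a = (\<lambda>j. hcounit (smash A G \<alpha>) a * sm \<Lambda> \<one>\<^bsub>G\<^esub> j)" for a
  proof -
    have "hmul (smash A G \<alpha>) (sm \<Lambda> \<one>\<^bsub>G\<^esub>) a (l,z) = hcounit (smash A G \<alpha>) a * sm \<Lambda> \<one>\<^bsub>G\<^esub> (l,z)" for l z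
      unfolding smash_mul sm_slice smash_counit
      by (cases "z = \<one>\<^bsub>G\<^esub>") (simp_all add: r hmul_zero_left sm_def)
    then show ?thesis by (simp add: fun_eq_iff)
  qed
  have E: "hcounit (smash A G \<alpha>) (sm \<Lambda> \<one>\<^bsub>G\<^esub>) = 1"
    unfolding smash_counit sm_slice using e by simp
  show ?thesis unfolding is_int_def using L R E by blast
qed

theorem theorem4p1:
  fixes A :: "('b::finite, 'k::field_char_0) hopf_sc"
    and G :: "('g::finite, 'z) monoid_scheme"
    and \<alpha> :: "'g \<Rightarrow> 'b \<Rightarrow> 'b \<Rightarrow> 'k"
    and n :: nat and \<rho> :: "'b \<times> 'g \<Rightarrow> 'k mat"
    and d :: "'g \<Rightarrow> nat" and \<sigma> :: "'g \<Rightarrow> 'b \<Rightarrow> 'k mat" and \<iota> :: "'g \<Rightarrow> 'k mat"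
    and m :: nat
  assumes "alg_closed TYPE('k)"
    and "hopf_algebra A" and "semisimple A"
    and "group G" and "carrier G = UNIV"
    and "hopf_action G A \<alpha>"
    and "is_module (smash A G \<alpha>) n \<rho>"
    and "\<And>x. is_module A (d x) (\<sigma> x)"
    and "\<And>x. \<iota> x \<in> carrier_mat n (d x)"
    and "\<And>x w w'. w \<in> carrier_vec (d x) \<Longrightarrow> w' \<in> carrier_vec (d x) \<Longrightarrow> \<iota> x *\<^sub>v w = \<iota> x *\<^sub>v w' \<Longrightarrow> w = w'"
    and "\<And>x. {rep_of n \<rho> (pK A x) *\<^sub>v v | v. v \<in> carrier_vec n} = {\<iota> x *\<^sub>v w | w. w \<in> carrier_vec (d x)}"
    and "\<And>x a. rep_of n \<rho> (aK a) * \<iota> x = \<iota> x * rep_of (d x) (\<sigma> x) a"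
    and "m > 0"
  shows "indicator (smash A G \<alpha>) m n \<rho> =
    (\<Sum>x\<in>{x. x [^]\<^bsub>G\<^esub> m = \<one>\<^bsub>G\<^esub>}. tw_indicator A (actv \<alpha> (inv\<^bsub>G\<^esub> x)) m (d x) (\<sigma> x))"
proof -
  have ha: "hopf_algebra A" and gr: "group G" and cu: "carrier G = UNIV" and act: "hopf_action G A \<alpha>"
    using assms by blast+
  have runit: "\<And>u. hmul A u (hunit A) = u" using ha unfolding hopf_algebra_def by blast
  obtain \<Lambda> where Li: "is_int A \<Lambda>" using exists_integral[OF ha assms(3)] by blast
  have nA: "norm_integral A = \<Lambda>" by (rule norm_integral_eq[OF Li])
  have nK: "norm_integral (smash A G \<alpha>) = sm \<Lambda> \<one>\<^bsub>G\<^esub>" by (rule norm_integral_eq[OF smash_int[OF Li]])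
  define HK where "HK = hpow (smash A G \<alpha>) m (sm \<Lambda> \<one>\<^bsub>G\<^esub>)"
  have m0: "m \<noteq> 0" using assms(13) by simp
  have slice: "(\<lambda>i. HK(i,y)) = (if y [^]\<^bsub>G\<^esub> m = \<one>\<^bsub>G\<^esub> then hpow_tw A (actv \<alpha> (inv\<^bsub>G\<^esub> y)) m \<Lambda> else (\<lambda>_. 0))" for y
  proof -
    have "(\<lambda>i. HK(i,y)) = Q A (actv \<alpha> (inv\<^bsub>G\<^esub> y)) 0 m (\<lambda>i. sm \<Lambda> \<one>\<^bsub>G\<^esub> (i, y [^]\<^bsub>G\<^esub> m))"
      unfolding HK_def hpow_def hpow_tw_Q by (rule ext) (rule Q_smash[OF ha gr cu act m0])
    also have "\<dots> = (if y [^]\<^bsub>G\<^esub> m = \<one>\<^bsub>G\<^esub> then hpow_tw A (actv \<alpha> (inv\<^bsub>G\<^esub> y)) m \<Lambda> else (\<lambda>_. 0))"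
      unfolding sm_slice by (simp add: hpow_tw_Q lin_zero[OF Q_lin])
    finally show ?thesis .
  qed
  have "indicator (smash A G \<alpha>) m n \<rho> = character n \<rho> HK"
    unfolding indicator_def nK HK_def ..
  also have "\<dots> = (\<Sum>y\<in>UNIV. character n \<rho> (sm (\<lambda>i. HK(i,y)) y))" by (rule char_decomp)
  also have "\<dots> = (\<Sum>y\<in>UNIV. character (d y) (\<sigma> y) (\<lambda>i. HK(i,y)))"
    by (rule sum.cong[OF refl]) (rule char_slice[OF runit assms(7) assms(8) assms(9) assms(10) assms(11) assms(12)])
  also have "\<dots> = (\<Sum>y\<in>UNIV. if y [^]\<^bsub>G\<^esub> m = \<one>\<^bsub>G\<^esub> then tw_indicator A (actv \<alpha> (inv\<^bsub>G\<^esub> y)) m (d y) (\<sigma> y) else 0)"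
    by (rule sum.cong[OF refl]) (simp add: slice tw_indicator_def nA char_zero)
  also have "\<dots> = (\<Sum>y\<in>{y\<in>UNIV. y [^]\<^bsub>G\<^esub> m = \<one>\<^bsub>G\<^esub>}. tw_indicator A (actv \<alpha> (inv\<^bsub>G\<^esub> y)) m (d y) (\<sigma> y))"
    by (rule sum.inter_filter[symmetric]) simp
  finally show ?thesis by simp
qed


end
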